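(* Let $0<\delta_0\le1/253$ and $\lambda,\mu,R>0$. Assume Conditions (C3) and (C6), that $$\mu^2\le\frac{\delta_0R^2}{2(1+J(g^0)+J_h)^2}\quad\text{and}\quad \frac{4\lambda^2s_0}{\Lambda_{\tilde X,\min}^2}\le\delta_0R^2 .$$ Then on the event $\mathcal T(\delta_0,R)$, every minimizer $(\hat\beta,\hat g)$ of the doubly penalised least squares criterion satisfies $$\Big|\mu^2\sum_{j=1}^p J(\hat g,h_j)(\hat\beta_j-\beta^0_j)\Big|\le\sqrt{2\delta_0}\,R^2\,\|\hat\beta-\beta^0\|_1 .$$
   Context: Setting. Let $(x,z)$ be a random vector with $x\in\mathbb R^p$ (a row vector) and $z\in\mathbb R^d$, joint distribution $Q$ and marginal $Q_z$ of $z$; let $(x_i,z_i)$, $i=1,\dots,n$, be i.i.d. copies, $X$ the $n\times p$ matrix with rows $x_i$. Let $\mathcal G$ be a linear subspace of $L_2(Q_z)$ equipped with a semi-inner product $J(\cdot,\cdot)$ with associated seminorm $J(\cdot)$. Fix $\beta^0\in\mathbb R^p$, $g^0\in\mathcal G$; $s_0=|\{j:\beta^0_j\ne0\}|$. Responses $Y=X\beta^0+g^0(Z)+E$, where $g(Z)=(g(z_1),\dots,g(z_n))^T$, $E=(e_1,\dots,e_n)^T$. For a function $f$: $\|f\|^2=\mathbb E f(x,z)^2$, $\|f\|_n^2=\frac1n\sum_i f(x_i,z_i)^2$; for $v\in\mathbb R^n$, $\|v\|_n^2=v^Tv/n$. Estimator: $(\hat\beta,\hat g)$ minimizes $\|Y-X\beta-g(Z)\|_n^2+\lambda\|\beta\|_1+\mu^2J^2(g)$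 over $\mathbb R^p\times\mathcal G$. For $\beta\in\mathbb R^p$, $g\in\mathcal G$, $f=X\beta+g$ denotes $(x,z)\mapsto x\beta+g(z)$ and $\tau(f)=\frac{\lambda\|\beta\|_1}{R\sqrt{\delta_0/2}}+\sqrt{\|X\beta+g\|^2+\mu^2J^2(g)}$; $\mathcal F(R)$ is the set of all such $f$ with $\tau(f)\le R$. $\mathcal T(\delta_0,R)$ is the event that $\sup_{f\in\mathcal F(R)}|\|f\|_n^2-\|f\|^2|\le\delta_0R^2$ and $\sup_{f\in\mathcal F(R)}|E^Tf(X,Z)|/n\le\delta_0R^2$. Let $h(z)=\mathbb E[x\mid z]$ with components $h_j$, $\tilde x=x-h(z)$; $\Lambda_{\tilde X,\min}^2$ is the smallest eigenvalue of $\mathbb E[\tilde x^T\tilde x]$ and $\Lambda_{h,\max}^2$ the largest eigenvalue of $\mathbb E[h(z)^Th(z)]$. Conditions: (C3) $\Lambda_{\tilde X,\min}>0$, $\Lambda_{h,\max}<\infty$; (C6) $h_j\in\mathcal G$ and $J(h_j)\le J_h$ for all $j$, for a constant $J_h$. *)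

theory Defs
  imports "HOL-Probability.Probability"
begin

text \<open>Generic setting: x is a row vector in R^p (type real^'p), z in R^d (type real^'d).
  The joint law Q of (x,z) is a probability measure M on real^'p \<times> real^'d.\<close>

definition l1norm :: "real^'p \<Rightarrow> real" where
  "l1norm b = (\<Sum>j\<in>UNIV. \<bar>b $ j\<bar>)"

definition L2_subspace :: "'a measure \<Rightarrow> ('a \<Rightarrow> real) set \<Rightarrow> bool" where
  "L2_subspace Qz G \<longleftrightarrow>
     (\<lambda>z. 0) \<in> G \<and>
     (\<forall>f\<in>G. \<forall>g\<in>G. (\<lambda>z. f z + g z) \<in> G) \<and>
     (\<forall>c. \<forall>f\<in>G. (\<lambda>z. c * f z) \<in> G) \<and>
     (\<forall>g\<in>G. g \<in> borel_measurable Qz \<and> integrable Qz (\<lambda>z. (g z)^2))"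

definition semi_inner_on :: "('a \<Rightarrow> real) set \<Rightarrow> (('a \<Rightarrow> real) \<Rightarrow> ('a \<Rightarrow> real) \<Rightarrow> real) \<Rightarrow> bool" where
  "semi_inner_on G J \<longleftrightarrow>
     (\<forall>f\<in>G. \<forall>g\<in>G. J f g = J g f) \<and>
     (\<forall>f\<in>G. \<forall>g\<in>G. \<forall>k\<in>G. J (\<lambda>z. f z + g z) k = J f k + J g k) \<and>
     (\<forall>c. \<forall>f\<in>G. \<forall>g\<in>G. J (\<lambda>z. c * f z) g = c * J f g) \<and>
     (\<forall>f\<in>G. 0 \<le> J f f)"

definition seminormJ :: "(('a \<Rightarrow> real) \<Rightarrow> ('a \<Rightarrow> real) \<Rightarrow> real) \<Rightarrow> ('a \<Rightarrow> real) \<Rightarrow> real" where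
  "seminormJ J g = sqrt (J g g)"

definition is_cond_exp_x_given_z ::
  "((real^'p) \<times> (real^'d)) measure \<Rightarrow> (real^'d \<Rightarrow> real^'p) \<Rightarrow> bool" where
  "is_cond_exp_x_given_z M h \<longleftrightarrow>
     (\<forall>j. (\<lambda>z. h z $ j) \<in> borel_measurable borel \<and>
          integrable M (\<lambda>\<omega>. h (snd \<omega>) $ j) \<and>
          integrable M (\<lambda>\<omega>. fst \<omega> $ j) \<and>
          (\<forall>A\<in>sets borel.
             (\<integral>\<omega>. indicator A (snd \<omega>) * (fst \<omega> $ j) \<partial>M) =
             (\<integral>\<omega>. indicator A (snd \<omega>) * (h (snd \<omega>) $ j) \<partial>M)))"

definition cov_xtilde :: "((real^'p) \<times> (real^'d)) measure \<Rightarrow> (real^'d \<Rightarrow> real^'p) \<Rightarrow> real^'p^'p" where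
  "cov_xtilde M h = (\<chi> i j. \<integral>\<omega>. (fst \<omega> $ i - h (snd \<omega>) $ i) * (fst \<omega> $ j - h (snd \<omega>) $ j) \<partial>M)"

definition min_eigenvalue :: "real^'n^'n \<Rightarrow> real" where
  "min_eigenvalue A = Min {l. \<exists>v. v \<noteq> 0 \<and> A *v v = l *\<^sub>R v}"

definition pop_sq :: "((real^'p) \<times> (real^'d)) measure \<Rightarrow> real^'p \<Rightarrow> (real^'d \<Rightarrow> real) \<Rightarrow> real" where
  "pop_sq M b g = (\<integral>\<omega>. (fst \<omega> \<bullet> b + g (snd \<omega>))^2 \<partial>M)"

definition emp_sq :: "nat \<Rightarrow> (nat \<Rightarrow> real^'p) \<Rightarrow> (nat \<Rightarrow> real^'d) \<Rightarrow> real^'p \<Rightarrow> (real^'d \<Rightarrow> real) \<Rightarrow> real" where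
  "emp_sq n xs zs b g = (1 / real n) * (\<Sum>i<n. (xs i \<bullet> b + g (zs i))^2)"

definition tau ::
  "((real^'p) \<times> (real^'d)) measure \<Rightarrow> ((real^'d \<Rightarrow> real) \<Rightarrow> (real^'d \<Rightarrow> real) \<Rightarrow> real)
   \<Rightarrow> real \<Rightarrow> real \<Rightarrow> real \<Rightarrow> real \<Rightarrow> real^'p \<Rightarrow> (real^'d \<Rightarrow> real) \<Rightarrow> real" where
  "tau M J lam mu delta0 R b g =
     lam * l1norm b / (R * sqrt (delta0 / 2)) + sqrt (pop_sq M b g + mu^2 * (seminormJ J g)^2)"

text \<open>The event T(delta0,R), evaluated at a sample realisation (xs, zs, e).\<close>
definition event_T ::
  "((real^'p) \<times> (real^'d)) measure \<Rightarrow> (real^'d \<Rightarrow> real) set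
   \<Rightarrow> ((real^'d \<Rightarrow> real) \<Rightarrow> (real^'d \<Rightarrow> real) \<Rightarrow> real)
   \<Rightarrow> real \<Rightarrow> real \<Rightarrow> real \<Rightarrow> real
   \<Rightarrow> nat \<Rightarrow> (nat \<Rightarrow> real^'p) \<Rightarrow> (nat \<Rightarrow> real^'d) \<Rightarrow> (nat \<Rightarrow> real) \<Rightarrow> bool" where
  "event_T M G J lam mu delta0 R n xs zs e \<longleftrightarrow>
     (\<forall>b. \<forall>g\<in>G. tau M J lam mu delta0 R b g \<le> R \<longrightarrow>
        \<bar>emp_sq n xs zs b g - pop_sq M b g\<bar> \<le> delta0 * R^2 \<and>
        \<bar>\<Sum>i<n. e i * (xs i \<bullet> b + g (zs i))\<bar> / real n \<le> delta0 * R^2)"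

definition crit ::
  "((real^'d \<Rightarrow> real) \<Rightarrow> (real^'d \<Rightarrow> real) \<Rightarrow> real) \<Rightarrow> real \<Rightarrow> real
   \<Rightarrow> nat \<Rightarrow> (nat \<Rightarrow> real) \<Rightarrow> (nat \<Rightarrow> real^'p) \<Rightarrow> (nat \<Rightarrow> real^'d)
   \<Rightarrow> real^'p \<Rightarrow> (real^'d \<Rightarrow> real) \<Rightarrow> real" where
  "crit J lam mu n Y xs zs b g =
     (1 / real n) * (\<Sum>i<n. (Y i - xs i \<bullet> b - g (zs i))^2)
     + lam * l1norm b + mu^2 * (seminormJ J g)^2"

end

theory Submission
  imports Defs
begin


lemma meas_fst_j: "(\<lambda>\<omega>::(real^'p)\<times>(real^'d). fst \<omega> $ j) \<in> borel_measurable borel"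
  by (intro borel_measurable_continuous_onI continuous_intros)

lemma meas_snd: "(snd :: (real^'p)\<times>(real^'d) \<Rightarrow> _) \<in> borel_measurable borel"
  by (intro borel_measurable_continuous_onI continuous_intros)

lemma L2_prod:
  fixes f g :: "'a \<Rightarrow> real"
  assumes "f \<in> borel_measurable M" "g \<in> borel_measurable M"
    "integrable M (\<lambda>x. (f x)^2)" "integrable M (\<lambda>x. (g x)^2)"
  shows "integrable M (\<lambda>x. f x * g x)"
proof (rule Bochner_Integration.integrable_bound[of _ "\<lambda>x. (f x)^2 + (g x)^2"])
  show "integrable M (\<lambda>x. (f x)^2 + (g x)^2)" using assms by auto
  show "(\<lambda>x. f x * g x) \<in> borel_measurable M" using assms by auto
  show "AE x in M. norm (f x * g x) \<le> norm ((f x)^2 + (g x)^2)"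
  proof (rule AE_I2)
    fix x
    have "2 * \<bar>f x * g x\<bar> \<le> (f x)^2 + (g x)^2"
      using sum_squares_bound[of "\<bar>f x\<bar>" "\<bar>g x\<bar>"] by (simp add: abs_mult power2_eq_square)
    then show "norm (f x * g x) \<le> norm ((f x)^2 + (g x)^2)" by simp
  qed
qed

lemma L2_add:
  fixes f g :: "'a \<Rightarrow> real"
  assumes "f \<in> borel_measurable M" "g \<in> borel_measurable M"
    "integrable M (\<lambda>x. (f x)^2)" "integrable M (\<lambda>x. (g x)^2)"
  shows "integrable M (\<lambda>x. (f x + g x)^2)"
proof -
  have "integrable M (\<lambda>x. (f x)^2 + 2 * (f x * g x) + (g x)^2)"
    using L2_prod[OF assms] assms by auto
  moreover have "(\<lambda>x. (f x + g x)^2) = (\<lambda>x. (f x)^2 + 2 * (f x * g x) + (g x)^2)"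
    by (auto simp: power2_sum)
  ultimately show ?thesis by simp
qed

lemma L2_scale:
  fixes f :: "'a \<Rightarrow> real"
  assumes "integrable M (\<lambda>x. (f x)^2)"
  shows "integrable M (\<lambda>x. (c * f x)^2)"
  using integrable_mult_right[OF assms, of "c^2"] by (simp add: power_mult_distrib)

lemma L2_sum:
  fixes f :: "'b \<Rightarrow> 'a \<Rightarrow> real"
  assumes "finite S" "\<And>j. j \<in> S \<Longrightarrow> f j \<in> borel_measurable M"
    "\<And>j. j \<in> S \<Longrightarrow> integrable M (\<lambda>x. (f j x)^2)"
  shows "integrable M (\<lambda>x. (\<Sum>j\<in>S. f j x)^2) \<and> (\<lambda>x. (\<Sum>j\<in>S. f j x)) \<in> borel_measurable M"
  using assms
proof (induction S rule: finite_induct)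
  case empty then show ?case by simp
next
  case (insert a S)
  then show ?case by (auto intro!: L2_add)
qed



lemma cond_orth:
  fixes M :: "((real^'p) \<times> (real^'d)) measure" and h :: "real^'d \<Rightarrow> real^'p"
    and w :: "real^'d \<Rightarrow> real"
  assumes PS: "prob_space M" and SM: "sets M = sets borel"
    and CE: "is_cond_exp_x_given_z M h"
    and wm: "w \<in> borel_measurable borel"
    and wi: "integrable M (\<lambda>\<omega>. w (snd \<omega>) * (fst \<omega> $ j))"
  shows "(\<integral>\<omega>. w (snd \<omega>) * (fst \<omega> $ j) \<partial>M) = (\<integral>\<omega>. w (snd \<omega>) * (h (snd \<omega>) $ j) \<partial>M)"
proof -
  interpret prob_space M by (rule PS)
  have spM: "space M = UNIV" using sets_eq_imp_space_eq[OF SM] by simp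
  have sndM: "snd \<in> measurable M borel"
    using meas_snd measurable_cong_sets[OF SM refl] by blast
  have fstjM: "(\<lambda>\<omega>. fst \<omega> $ j) \<in> borel_measurable M"
    using meas_fst_j measurable_cong_sets[OF SM refl] by blast
  define F where "F = vimage_algebra (space M) snd (borel :: (real^'d) measure)"
  have sub: "subalgebra M F"
    unfolding subalgebra_def F_def
    using sets_image_in_sets[OF refl sndM] by simp
  interpret fms: finite_measure_subalgebra M F
    by unfold_locales (rule sub)
  have sndF: "snd \<in> measurable F borel"
    unfolding F_def by (rule measurable_vimage_algebra1) simp
  have hjF: "(\<lambda>\<omega>. h (snd \<omega>) $ j) \<in> borel_measurable F"
    using measurable_compose[OF sndF, of "\<lambda>z. h z $ j"] CE
    unfolding is_cond_exp_x_given_z_def by auto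
  have wF: "(\<lambda>\<omega>. w (snd \<omega>)) \<in> borel_measurable F"
    using measurable_compose[OF sndF wm] by simp
  have ints: "integrable M (\<lambda>\<omega>. h (snd \<omega>) $ j)" "integrable M (\<lambda>\<omega>. fst \<omega> $ j)"
    using CE unfolding is_cond_exp_x_given_z_def by auto
  have AEeq: "AE \<omega> in M. real_cond_exp M F (\<lambda>\<omega>. fst \<omega> $ j) \<omega> = h (snd \<omega>) $ j"
  proof (rule fms.real_cond_exp_charact)
    fix A assume "A \<in> sets F"
    then obtain B where B: "B \<in> sets borel" "A = snd -` B \<inter> space M"
      unfolding F_def using sets_vimage_algebra2[of snd "space M" borel] by auto
    have ind: "\<And>\<omega>. indicator A \<omega> = (indicator B (snd \<omega>) :: real)"
      using B(2) spM by (auto split: split_indicator)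
    show "(\<integral>\<omega>\<in>A. fst \<omega> $ j \<partial>M) = (\<integral>\<omega>\<in>A. h (snd \<omega>) $ j \<partial>M)"
      unfolding set_lebesgue_integral_def using CE B(1)
      unfolding is_cond_exp_x_given_z_def by (simp add: ind)
  qed (use ints hjF in auto)
  have "(\<integral>\<omega>. w (snd \<omega>) * (fst \<omega> $ j) \<partial>M) =
        (\<integral>\<omega>. w (snd \<omega>) * real_cond_exp M F (\<lambda>\<omega>. fst \<omega> $ j) \<omega> \<partial>M)"
    using fms.real_cond_exp_intg(2)[OF wi wF fstjM] by simp
  also have "\<dots> = (\<integral>\<omega>. w (snd \<omega>) * (h (snd \<omega>) $ j) \<partial>M)"
  proof (rule integral_cong_AE)
    have wM: "(\<lambda>\<omega>. w (snd \<omega>)) \<in> borel_measurable M" by (rule measurable_from_subalg[OF sub wF])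
    have hM: "(\<lambda>\<omega>. h (snd \<omega>) $ j) \<in> borel_measurable M" by (rule measurable_from_subalg[OF sub hjF])
    show "(\<lambda>\<omega>. w (snd \<omega>) * real_cond_exp M F (\<lambda>\<omega>. fst \<omega> $ j) \<omega>) \<in> borel_measurable M"
      using wM by (intro borel_measurable_times) auto
    show "(\<lambda>\<omega>. w (snd \<omega>) * (h (snd \<omega>) $ j)) \<in> borel_measurable M"
      using wM hM by (intro borel_measurable_times) auto
  qed (use AEeq in auto)
  finally show ?thesis .
qed



lemma sym_inner:
  fixes A :: "real^'n^'n"
  assumes S: "\<forall>i j. A$i$j = A$j$i"
  shows "u \<bullet> (A *v w) = w \<bullet> (A *v u)"
proof -
  have "u \<bullet> (A *v w) = (\<Sum>i\<in>UNIV. \<Sum>j\<in>UNIV. u$i * A$i$j * w$j)"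
    by (simp add: inner_vec_def matrix_vector_mult_def sum_distrib_left mult_ac)
  also have "\<dots> = (\<Sum>j\<in>UNIV. \<Sum>i\<in>UNIV. u$i * A$i$j * w$j)" by (rule sum.swap)
  also have "\<dots> = w \<bullet> (A *v u)"
    by (simp add: inner_vec_def matrix_vector_mult_def sum_distrib_left mult_ac S)
  finally show ?thesis .
qed

lemma eig_finite:
  fixes A :: "real^'n^'n"
  assumes S: "\<forall>i j. A$i$j = A$j$i"
  shows "finite {l. \<exists>v. v \<noteq> 0 \<and> A *v v = l *\<^sub>R v}" (is "finite ?E")
proof -
  define ev where "ev l = (SOME v. v \<noteq> 0 \<and> A *v v = l *\<^sub>R v)" for l
  have evp: "ev l \<noteq> 0 \<and> A *v ev l = l *\<^sub>R ev l" if "l \<in> ?E" for l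
    using that unfolding ev_def by simp (rule someI_ex, blast)
  have orth: "ev a \<bullet> ev b = 0" if "a \<in> ?E" "b \<in> ?E" "a \<noteq> b" for a b
  proof -
    have "a * (ev a \<bullet> ev b) = ev b \<bullet> (A *v ev a)" using evp[OF that(1)] by (simp add: inner_commute)
    also have "\<dots> = ev a \<bullet> (A *v ev b)" by (rule sym_inner[OF S])
    also have "\<dots> = b * (ev a \<bullet> ev b)" using evp[OF that(2)] by simp
    finally show ?thesis using that(3) by simp
  qed
  have inj: "inj_on ev ?E"
  proof (rule inj_onI)
    fix a b assume ab: "a \<in> ?E" "b \<in> ?E" "ev a = ev b"
    show "a = b"
    proof (rule ccontr)
      assume "a \<noteq> b"
      then have "ev a \<bullet> ev a = 0" using orth[OF ab(1,2)] ab(3) by simp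
      then show False using evp[OF ab(1)] by simp
    qed
  qed
  have "pairwise orthogonal (ev ` ?E)"
    unfolding pairwise_def orthogonal_def using orth by auto
  moreover have "0 \<notin> ev ` ?E" using evp by (metis (no_types, lifting) imageE)
  ultimately have "independent (ev ` ?E)" by (rule pairwise_orthogonal_independent)
  then have "finite (ev ` ?E)" by (rule independent_imp_finite)
  then show ?thesis using finite_imageD inj by blast
qed

lemma quad_min:
  fixes A :: "real^'n^'n"
  assumes S: "\<forall>i j. A$i$j = A$j$i"
  shows "\<exists>u m. u \<noteq> 0 \<and> A *v u = m *\<^sub>R u \<and> (\<forall>v. m * (v \<bullet> v) \<le> v \<bullet> (A *v v))"
proof -
  define q where "q v = v \<bullet> (A *v v)" for v
  have cq: "continuous_on (sphere 0 1) q"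
    unfolding q_def by (intro continuous_intros linear_continuous_on) auto
  have ne: "sphere (0::real^'n) 1 \<noteq> {}"
    using vector_choose_size[of 1] by auto
  obtain u where u: "u \<in> sphere 0 1" "\<And>y. y \<in> sphere 0 1 \<Longrightarrow> q u \<le> q y"
    using continuous_attains_inf[OF compact_sphere ne cq] by blast
  define m where "m = q u"
  have uu: "u \<bullet> u = 1" using u(1) by (simp add: dot_square_norm)
  have qscale: "q (c *\<^sub>R v) = c^2 * q v" for c v
    by (simp add: q_def matrix_vector_mult_scaleR power2_eq_square)
  have low: "m * (v \<bullet> v) \<le> q v" for v
  proof (cases "v = 0")
    case True then show ?thesis by (simp add: q_def)
  next
    case False
    define w where "w = (1 / norm v) *\<^sub>R v"
    have "w \<in> sphere 0 1" using False by (simp add: w_def)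
    then have "m \<le> q w" using u(2) m_def by simp
    have vw: "v = norm v *\<^sub>R w" using False by (simp add: w_def)
    have "q v = (norm v)^2 * q w" by (subst vw, rule qscale)
    moreover have "v \<bullet> v = (norm v)^2" by (simp add: dot_square_norm)
    ultimately show ?thesis using \<open>m \<le> q w\<close>
      by (simp add: mult_right_mono mult.commute[of "(norm v)^2"])
  qed
  define w where "w = A *v u - m *\<^sub>R u"
  define a where "a = w \<bullet> w"
  define d where "d = q w - m * (w \<bullet> w)"
  have d0: "0 \<le> d" using low[of w] by (simp add: d_def)
  have key: "0 \<le> 2 * t * a + t^2 * d" for t
  proof -
    define X where "X = (u + t *\<^sub>R w) \<bullet> (u + t *\<^sub>R w)"
    define Q where "Q = q (u + t *\<^sub>R w)"
    have 1: "m * X \<le> Q" unfolding X_def Q_def by (rule low)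
    have 2: "X = 1 + 2 * t * (u \<bullet> w) + t^2 * (w \<bullet> w)"
      using uu unfolding X_def by (simp add: inner_add inner_commute power2_eq_square algebra_simps)
    have 3: "Q = m + 2 * t * (w \<bullet> (A *v u)) + t^2 * q w"
    proof -
      have "Q = q u + t * (u \<bullet> (A *v w)) + t * (w \<bullet> (A *v u)) + t^2 * q w"
        unfolding Q_def by (simp add: q_def matrix_vector_right_distrib matrix_vector_mult_scaleR inner_add
            power2_eq_square algebra_simps)
      then show ?thesis using sym_inner[OF S, of u w] m_def by simp
    qed
    have 4: "w \<bullet> (A *v u) = a + m * (u \<bullet> w)"
      by (simp add: a_def w_def inner_diff inner_commute algebra_simps)
    have "m * (1 + 2 * t * (u \<bullet> w) + t^2 * (w \<bullet> w)) \<le> m + 2 * t * (a + m * (u \<bullet> w)) + t^2 * q w"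
      using 1 unfolding 2 3 4 .
    then show ?thesis unfolding d_def by (simp add: algebra_simps)
  qed
  have "a = 0"
  proof -
    define k where "k = d + 1"
    have k0: "0 < k" using d0 by (simp add: k_def)
    have "0 \<le> 2 * (- a / k) * a + (- a / k)^2 * d" by (rule key)
    then have "0 \<le> k^2 * (2 * (- a / k) * a + (- a / k)^2 * d)" using k0 by simp
    moreover have "k^2 * (2 * (- a / k) * a + (- a / k)^2 * d) = - 2 * a^2 * k + a^2 * d"
      using k0 by (simp add: field_simps power2_eq_square)
    ultimately have "0 \<le> - 2 * a^2 * k + a^2 * d" by simp
    then have "a^2 * (d + 2) \<le> 0" by (simp add: k_def algebra_simps)
    then have "a^2 \<le> 0" using d0 by (simp add: mult_le_0_iff)
    then show ?thesis by simp
  qed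
  then have "w = 0" by (simp add: a_def)
  then have "A *v u = m *\<^sub>R u" by (simp add: w_def)
  moreover have "u \<noteq> 0" using uu by auto
  ultimately show ?thesis using low unfolding q_def by blast
qed

lemma min_eig_quad:
  fixes A :: "real^'n^'n"
  assumes S: "\<forall>i j. A$i$j = A$j$i"
  shows "min_eigenvalue A * (v \<bullet> v) \<le> v \<bullet> (A *v v)"
proof -
  obtain u m where um: "u \<noteq> 0" "A *v u = m *\<^sub>R u" "\<forall>v. m * (v \<bullet> v) \<le> v \<bullet> (A *v v)"
    using quad_min[OF S] by blast
  have "min_eigenvalue A \<le> m"
    unfolding min_eigenvalue_def using eig_finite[OF S] um(1,2) by (intro Min_le) auto
  then have "min_eigenvalue A * (v \<bullet> v) \<le> m * (v \<bullet> v)" by (simp add: mult_right_mono)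
  then show ?thesis using um(3) by (meson order_trans)
qed



definition isL2 :: "'a measure \<Rightarrow> ('a \<Rightarrow> real) \<Rightarrow> bool" where
  "isL2 M f \<longleftrightarrow> f \<in> borel_measurable M \<and> integrable M (\<lambda>x. (f x)^2)"

lemma isL2_add: "isL2 M f \<Longrightarrow> isL2 M g \<Longrightarrow> isL2 M (\<lambda>x. f x + g x)"
  unfolding isL2_def using L2_add by auto

lemma isL2_scale: "isL2 M f \<Longrightarrow> isL2 M (\<lambda>x. c * f x)"
  unfolding isL2_def using L2_scale by auto

lemma isL2_diff: "isL2 M f \<Longrightarrow> isL2 M g \<Longrightarrow> isL2 M (\<lambda>x. f x - g x)"
  using isL2_add[of M f "\<lambda>x. (-1) * g x"] isL2_scale[of M g "-1"] by simp

lemma isL2_prod: "isL2 M f \<Longrightarrow> isL2 M g \<Longrightarrow> integrable M (\<lambda>x. f x * g x)"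
  unfolding isL2_def using L2_prod by auto

lemma isL2_sum: "finite S \<Longrightarrow> (\<And>j. j \<in> S \<Longrightarrow> isL2 M (f j)) \<Longrightarrow> isL2 M (\<lambda>x. \<Sum>j\<in>S. f j x)"
  unfolding isL2_def using L2_sum[of S f M] by auto

lemma pop_lower:
  fixes M :: "((real^'p) \<times> (real^'d)) measure" and h :: "real^'d \<Rightarrow> real^'p"
    and G :: "(real^'d \<Rightarrow> real) set" and g :: "real^'d \<Rightarrow> real" and b :: "real^'p"
  assumes PS: "prob_space M" and SM: "sets M = sets borel"
    and L2x: "\<forall>j. integrable M (\<lambda>\<omega>. (fst \<omega> $ j)^2)"
    and GS: "L2_subspace (distr M borel snd) G"
    and CE: "is_cond_exp_x_given_z M h"
    and hh: "\<forall>i j. integrable M (\<lambda>\<omega>. h (snd \<omega>) $ i * h (snd \<omega>) $ j)"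
    and gG: "g \<in> G"
  shows "min_eigenvalue (cov_xtilde M h) * (b \<bullet> b) \<le> pop_sq M b g"
proof -
  interpret prob_space M by (rule PS)
  have sndM: "snd \<in> measurable M borel"
    using meas_snd measurable_cong_sets[OF SM refl] by blast
  have hjb: "(\<lambda>z. h z $ j) \<in> borel_measurable borel" for j
    using CE unfolding is_cond_exp_x_given_z_def by auto
  have gb: "g \<in> borel_measurable borel"
    using GS gG unfolding L2_subspace_def
    using measurable_cong_sets[of "distr M borel snd" borel borel borel] by auto
  have gint: "integrable (distr M borel snd) (\<lambda>z. (g z)^2)"
    using GS gG unfolding L2_subspace_def by auto
  define X where "X j \<omega> = fst \<omega> $ j" for j and \<omega> :: "(real^'p) \<times> (real^'d)"
  define H where "H j \<omega> = h (snd \<omega>) $ j" for j and \<omega> :: "(real^'p) \<times> (real^'d)"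
  define w where "w z = (\<Sum>j\<in>UNIV. b $ j * h z $ j) + g z" for z
  have wb: "w \<in> borel_measurable borel" unfolding w_def using hjb gb by measurable
  have LX: "isL2 M (X j)" for j
    unfolding isL2_def X_def using L2x meas_fst_j measurable_cong_sets[OF SM refl] by blast
  have LH: "isL2 M (H j)" for j
    unfolding isL2_def H_def using hh[rule_format, of j j] measurable_compose[OF sndM hjb]
    by (simp add: power2_eq_square)
  have Lg: "isL2 M (\<lambda>\<omega>. g (snd \<omega>))"
    unfolding isL2_def using measurable_compose[OF sndM gb] gint integrable_distr_eq[OF sndM, of "\<lambda>z. (g z)^2"] gb
    by auto
  have Lw: "isL2 M (\<lambda>\<omega>. w (snd \<omega>))"
    unfolding w_def using LH Lg unfolding H_def
    by (intro isL2_add isL2_sum isL2_scale) auto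
  define U where "U \<omega> = (\<Sum>j\<in>UNIV. b $ j * (X j \<omega> - H j \<omega>))" for \<omega>
  have LU: "isL2 M U"
    unfolding U_def using LX LH by (intro isL2_sum isL2_scale isL2_diff) auto
  have split: "fst \<omega> \<bullet> b + g (snd \<omega>) = U \<omega> + w (snd \<omega>)" for \<omega>
    by (simp add: U_def w_def X_def H_def inner_vec_def algebra_simps sum.distrib sum_subtractf)
  have cross: "(\<integral>\<omega>. U \<omega> * w (snd \<omega>) \<partial>M) = 0"
  proof -
    have eqj: "(\<integral>\<omega>. w (snd \<omega>) * X j \<omega> \<partial>M) = (\<integral>\<omega>. w (snd \<omega>) * H j \<omega> \<partial>M)" for j
      unfolding X_def H_def
      by (rule cond_orth[OF PS SM CE wb]) (use isL2_prod[OF Lw LX] in \<open>simp add: X_def\<close>)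
    have "(\<integral>\<omega>. U \<omega> * w (snd \<omega>) \<partial>M) =
          (\<integral>\<omega>. (\<Sum>j\<in>UNIV. b $ j * (w (snd \<omega>) * X j \<omega> - w (snd \<omega>) * H j \<omega>)) \<partial>M)"
    proof (rule Bochner_Integration.integral_cong[OF refl])
      fix \<omega>
      show "U \<omega> * w (snd \<omega>) = (\<Sum>j\<in>UNIV. b $ j * (w (snd \<omega>) * X j \<omega> - w (snd \<omega>) * H j \<omega>))"
        unfolding U_def sum_distrib_right by (rule sum.cong) (auto simp: algebra_simps)
    qed
    also have "\<dots> = (\<Sum>j\<in>UNIV. b $ j * ((\<integral>\<omega>. w (snd \<omega>) * X j \<omega> \<partial>M) - (\<integral>\<omega>. w (snd \<omega>) * H j \<omega> \<partial>M)))"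
      using isL2_prod[OF Lw LX] isL2_prod[OF Lw LH] by (simp add: integral_sum)
    also have "\<dots> = 0" using eqj by simp
    finally show ?thesis .
  qed
  define C where "C = cov_xtilde M h"
  have Cij: "C $ i $ j = (\<integral>\<omega>. (X i \<omega> - H i \<omega>) * (X j \<omega> - H j \<omega>) \<partial>M)" for i j
    by (simp add: C_def cov_xtilde_def X_def H_def)
  have Csym: "\<forall>i j. C$i$j = C$j$i" by (simp add: Cij mult.commute)
  have LD: "isL2 M (\<lambda>\<omega>. X i \<omega> - H i \<omega>)" for i using LX LH by (rule isL2_diff)
  have U2: "(\<integral>\<omega>. (U \<omega>)^2 \<partial>M) = b \<bullet> (C *v b)"
  proof -
    have "(\<integral>\<omega>. (U \<omega>)^2 \<partial>M) =
          (\<integral>\<omega>. (\<Sum>i\<in>UNIV. \<Sum>j\<in>UNIV. b$i * (b$j * ((X i \<omega> - H i \<omega>) * (X j \<omega> - H j \<omega>)))) \<partial>M)"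
      by (simp add: U_def power2_eq_square sum_product algebra_simps)
    also have "\<dots> = (\<Sum>i\<in>UNIV. \<Sum>j\<in>UNIV. b$i * (b$j * C$i$j))"
      using isL2_prod[OF LD LD] by (simp add: integral_sum Cij)
    also have "\<dots> = b \<bullet> (C *v b)"
      by (simp add: inner_vec_def matrix_vector_mult_def sum_distrib_left algebra_simps)
    finally show ?thesis .
  qed
  have "pop_sq M b g = (\<integral>\<omega>. (U \<omega> + w (snd \<omega>))^2 \<partial>M)"
    unfolding pop_sq_def split ..
  also have "\<dots> \<ge> (\<integral>\<omega>. (U \<omega>)^2 + 2 * (U \<omega> * w (snd \<omega>)) \<partial>M)"
  proof (rule integral_mono)
    show "integrable M (\<lambda>\<omega>. (U \<omega> + w (snd \<omega>))^2)" using isL2_add[OF LU Lw] unfolding isL2_def by simp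
    show "integrable M (\<lambda>\<omega>. (U \<omega>)^2 + 2 * (U \<omega> * w (snd \<omega>)))"
      using LU isL2_prod[OF LU Lw] unfolding isL2_def by simp
    show "(U \<omega>)^2 + 2 * (U \<omega> * w (snd \<omega>)) \<le> (U \<omega> + w (snd \<omega>))^2" for \<omega>
      by (simp add: power2_sum)
  qed
  also have "(\<integral>\<omega>. (U \<omega>)^2 + 2 * (U \<omega> * w (snd \<omega>)) \<partial>M) = b \<bullet> (C *v b)"
    using LU isL2_prod[OF LU Lw] cross U2 unfolding isL2_def by simp
  finally have "b \<bullet> (C *v b) \<le> pop_sq M b g" .
  moreover have "min_eigenvalue C * (b \<bullet> b) \<le> b \<bullet> (C *v b)" by (rule min_eig_quad[OF Csym])
  ultimately show ?thesis unfolding C_def by simp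
qed



lemma sqrt2_bounds: "1.41 \<le> sqrt (2::real)" "sqrt (2::real) \<le> 1.42"
proof -
  show "1.41 \<le> sqrt (2::real)" by (rule real_le_rsqrt) (simp add: power2_eq_square)
  show "sqrt (2::real) \<le> 1.42" by (rule real_le_lsqrt) (simp_all add: power2_eq_square)
qed

lemma numeric_key:
  fixes c s2 A Lt R :: real
  assumes c0: "0 < c" and c2: "c^2 \<le> 1/253" and s2: "s2^2 = 2" "1.41 \<le> s2" "s2 \<le> 1.42"
    and A0: "0 \<le> A" and L0: "0 \<le> Lt" and R0: "0 < R"
    and H: "A^2 + Lt \<le> 3 * c^2 * R^2 + (1 + s2) * c * R * A"
  shows "Lt / (R * (c / s2)) + A \<le> R / 2"
proof -
  have cb: "c \<le> 1 / 15.9"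
  proof (rule ccontr)
    assume "\<not> c \<le> 1 / 15.9"
    then have "1/15.9 < c" by simp
    then have "(1/15.9)^2 < c^2" by (rule power_strict_mono) auto
    then show False using c2 by (simp add: power2_eq_square)
  qed
  define K where "K = 35 * s2 / 8 + 3 / 2"
  have K: "c * K \<le> 1/2"
  proof -
    have "K \<le> 7.7125" using s2 by (simp add: K_def)
    then have "c * K \<le> (1/15.9) * 7.7125"
      using cb c0 s2 by (intro mult_mono) (auto simp: K_def)
    then show ?thesis by simp
  qed
  have ident: "s2 * A^2 - (s2 + 3) * c * R * A + R^2 * c / 2 - 3 * s2 * c^2 * R^2
      = s2 * (A - (2 + 3 * s2) * c * R / 4)^2 + R^2 * c * (1/2 - c * K)"
  proof -
    have sq: "s2 * (s2 * x) = 2 * x" for x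
      using s2(1) by (metis mult.assoc power2_eq_square)
    show ?thesis unfolding K_def by (simp add: power2_eq_square field_simps sq)
  qed
  have "0 \<le> s2 * (A - (2 + 3 * s2) * c * R / 4)^2 + R^2 * c * (1/2 - c * K)"
    using K s2 c0 by (intro add_nonneg_nonneg mult_nonneg_nonneg) auto
  then have Q: "0 \<le> s2 * A^2 - (s2 + 3) * c * R * A + R^2 * c / 2 - 3 * s2 * c^2 * R^2"
    using ident by simp
  have "s2 * Lt \<le> s2 * (3 * c^2 * R^2 + (1 + s2) * c * R * A - A^2)"
    using H s2 by (intro mult_left_mono) auto
  also have "\<dots> \<le> (R/2 - A) * R * c"
    using Q s2(1) by (simp add: power2_eq_square algebra_simps)
  finally have "s2 * Lt \<le> (R/2 - A) * R * c" .
  then have "Lt \<le> (R/2 - A) * R * c / s2" using s2 by (simp add: field_simps)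
  then have "Lt / (R * (c / s2)) \<le> R/2 - A"
    using R0 c0 s2 by (simp add: field_simps)
  then show ?thesis by linarith
qed



lemma quad_disc:
  fixes A B C :: real
  assumes H: "\<And>s. 0 \<le> A + 2 * s * B + s^2 * C" and A0: "0 \<le> A" and C0: "0 \<le> C"
  shows "B^2 \<le> A * C"
proof (cases "C = 0")
  case True
  show ?thesis
  proof (cases "B = 0")
    case True then show ?thesis using A0 C0 by simp
  next
    case False
    have "0 \<le> A + 2 * (- (A + 1) / (2 * B)) * B" using H[of "- (A + 1) / (2 * B)"] \<open>C = 0\<close> by simp
    also have "\<dots> = -1" using False by (simp add: field_simps)
    finally show ?thesis by simp
  qed
next
  case False
  then have Cp: "0 < C" using C0 by simp
  have "0 \<le> A + 2 * (- B / C) * B + (- B / C)^2 * C" by (rule H)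
  also have "\<dots> = A - B^2 / C" using Cp by (simp add: field_simps power2_eq_square)
  finally have "B^2 / C \<le> A" by simp
  then show ?thesis using Cp by (simp add: field_simps)
qed

lemma G_scale: "L2_subspace Qz G \<Longrightarrow> f \<in> G \<Longrightarrow> (\<lambda>z. c * f z) \<in> G"
  unfolding L2_subspace_def by blast

lemma G_add: "L2_subspace Qz G \<Longrightarrow> f \<in> G \<Longrightarrow> g \<in> G \<Longrightarrow> (\<lambda>z. f z + g z) \<in> G"
  unfolding L2_subspace_def by blast

lemma J_add_left: "semi_inner_on G J \<Longrightarrow> f \<in> G \<Longrightarrow> g \<in> G \<Longrightarrow> k \<in> G \<Longrightarrow>
    J (\<lambda>z. f z + g z) k = J f k + J g k"
  unfolding semi_inner_on_def by blast

lemma J_scale_left: "semi_inner_on G J \<Longrightarrow> f \<in> G \<Longrightarrow> g \<in> G \<Longrightarrow> J (\<lambda>z. c * f z) g = c * J f g"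
  unfolding semi_inner_on_def by blast

lemma J_sym: "semi_inner_on G J \<Longrightarrow> f \<in> G \<Longrightarrow> g \<in> G \<Longrightarrow> J f g = J g f"
  unfolding semi_inner_on_def by blast

lemma J_nonneg: "semi_inner_on G J \<Longrightarrow> f \<in> G \<Longrightarrow> 0 \<le> J f f"
  unfolding semi_inner_on_def by blast

lemma J_expand:
  assumes SI: "semi_inner_on G J" and GS: "L2_subspace Qz G" and f: "f \<in> G" and g: "g \<in> G"
  shows "J (\<lambda>z. f z + s * g z) (\<lambda>z. f z + s * g z) = J f f + 2 * s * J f g + s^2 * J g g"
proof -
  have sg: "(\<lambda>z. s * g z) \<in> G" by (rule G_scale[OF GS g])
  have fs: "(\<lambda>z. f z + s * g z) \<in> G" using G_add[OF GS f sg] by simp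
  have "J (\<lambda>z. f z + s * g z) (\<lambda>z. f z + s * g z)
      = J f (\<lambda>z. f z + s * g z) + s * J g (\<lambda>z. f z + s * g z)"
    using J_add_left[OF SI f sg fs] J_scale_left[OF SI g fs] by simp
  also have "J f (\<lambda>z. f z + s * g z) = J f f + s * J g f"
    using J_sym[OF SI f fs] J_add_left[OF SI f sg f] J_scale_left[OF SI g f] by simp
  also have "J g (\<lambda>z. f z + s * g z) = J f g + s * J g g"
    using J_sym[OF SI g fs] J_add_left[OF SI f sg g] J_scale_left[OF SI g g] by simp
  finally show ?thesis using J_sym[OF SI f g] by (simp add: power2_eq_square algebra_simps)
qed

lemma sJ_nonneg: "semi_inner_on G J \<Longrightarrow> f \<in> G \<Longrightarrow> 0 \<le> seminormJ J f"
  unfolding seminormJ_def by (simp add: J_nonneg)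

lemma sJ_sq: "semi_inner_on G J \<Longrightarrow> f \<in> G \<Longrightarrow> (seminormJ J f)^2 = J f f"
  unfolding seminormJ_def by (simp add: J_nonneg)

lemma J_CS:
  assumes SI: "semi_inner_on G J" and GS: "L2_subspace Qz G" and f: "f \<in> G" and g: "g \<in> G"
  shows "\<bar>J f g\<bar> \<le> seminormJ J f * seminormJ J g"
proof -
  have "(J f g)^2 \<le> J f f * J g g"
  proof (rule quad_disc)
    fix s
    have "0 \<le> J (\<lambda>z. f z + s * g z) (\<lambda>z. f z + s * g z)"
      using J_nonneg[OF SI] G_add[OF GS f G_scale[OF GS g]] by simp
    then show "0 \<le> J f f + 2 * s * J f g + s^2 * J g g" using J_expand[OF SI GS f g] by simp
  qed (use J_nonneg[OF SI] f g in auto)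
  then have "sqrt ((J f g)^2) \<le> sqrt (J f f * J g g)" by (rule real_sqrt_le_mono)
  then show ?thesis unfolding seminormJ_def by (simp add: real_sqrt_mult)
qed

lemma sJ_tri:
  assumes SI: "semi_inner_on G J" and GS: "L2_subspace Qz G" and f: "f \<in> G" and g: "g \<in> G"
  shows "seminormJ J (\<lambda>z. f z + g z) \<le> seminormJ J f + seminormJ J g"
proof -
  have "J (\<lambda>z. f z + g z) (\<lambda>z. f z + g z) = J f f + 2 * J f g + J g g"
    using J_expand[OF SI GS f g, of 1] by simp
  also have "\<dots> \<le> (seminormJ J f)^2 + 2 * (seminormJ J f * seminormJ J g) + (seminormJ J g)^2"
    using J_CS[OF SI GS f g] sJ_sq[OF SI f] sJ_sq[OF SI g] by simp
  also have "\<dots> = (seminormJ J f + seminormJ J g)^2" by (simp add: power2_sum)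
  finally have "sqrt (J (\<lambda>z. f z + g z) (\<lambda>z. f z + g z)) \<le> sqrt ((seminormJ J f + seminormJ J g)^2)"
    by (rule real_sqrt_le_mono)
  then show ?thesis unfolding seminormJ_def[of J "\<lambda>z. f z + g z"]
    using sJ_nonneg[OF SI f] sJ_nonneg[OF SI g] by simp
qed

lemma sJ_scale:
  assumes SI: "semi_inner_on G J" and GS: "L2_subspace Qz G" and f: "f \<in> G"
  shows "seminormJ J (\<lambda>z. c * f z) = \<bar>c\<bar> * seminormJ J f"
proof -
  have cf: "(\<lambda>z. c * f z) \<in> G" by (rule G_scale[OF GS f])
  have "J (\<lambda>z. c * f z) (\<lambda>z. c * f z) = c * J (\<lambda>z. c * f z) f"
    using J_scale_left[OF SI f cf] J_sym[OF SI f cf] by simp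
  also have "\<dots> = c^2 * J f f" using J_scale_left[OF SI f f] by (simp add: power2_eq_square)
  finally show ?thesis unfolding seminormJ_def by (simp add: real_sqrt_mult)
qed



lemma l1_scale: "0 \<le> t \<Longrightarrow> l1norm (t *\<^sub>R b) = t * l1norm b"
  by (simp add: l1norm_def abs_mult sum_distrib_left)

lemma l1_nonneg: "0 \<le> l1norm b"
  by (simp add: l1norm_def sum_nonneg)

lemma pop_scale:
  "pop_sq M (t *\<^sub>R b) (\<lambda>z. t * g z) = t^2 * pop_sq M b g"
proof -
  have "(\<lambda>\<omega>. (fst \<omega> \<bullet> (t *\<^sub>R b) + t * g (snd \<omega>))^2) = (\<lambda>\<omega>. t^2 * (fst \<omega> \<bullet> b + g (snd \<omega>))^2)"
    by (rule ext) (simp add: power2_eq_square algebra_simps)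
  then show ?thesis unfolding pop_sq_def by simp
qed

lemma pop_nonneg: "0 \<le> pop_sq M b g"
  unfolding pop_sq_def by simp

lemma l1_basic:
  fixes b0 b :: "real^'p"
  shows "l1norm b0 + l1norm b - 2 * (\<Sum>j\<in>UNIV. if b0 $ j \<noteq> 0 then \<bar>b $ j\<bar> else 0) \<le> l1norm (b0 + b)"
proof -
  have "l1norm b0 + l1norm b - 2 * (\<Sum>j\<in>UNIV. if b0 $ j \<noteq> 0 then \<bar>b $ j\<bar> else 0)
      = (\<Sum>j\<in>UNIV. \<bar>b0 $ j\<bar> + \<bar>b $ j\<bar> - 2 * (if b0 $ j \<noteq> 0 then \<bar>b $ j\<bar> else 0))"
    by (simp add: l1norm_def sum.distrib sum_subtractf sum_distrib_left)
  also have "\<dots> \<le> (\<Sum>j\<in>UNIV. \<bar>(b0 + b) $ j\<bar>)"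
    by (rule sum_mono) auto
  finally show ?thesis by (simp add: l1norm_def)
qed

lemma LS_bound:
  fixes b0 b :: "real^'p"
  shows "(\<Sum>j\<in>UNIV. if b0 $ j \<noteq> 0 then \<bar>b $ j\<bar> else 0)^2 \<le> real (card {j. b0 $ j \<noteq> 0}) * (b \<bullet> b)"
proof -
  have "(\<Sum>j\<in>UNIV. if b0 $ j \<noteq> 0 then \<bar>b $ j\<bar> else 0) = (\<Sum>j\<in>UNIV. (if b0 $ j \<noteq> 0 then 1 else 0) * \<bar>b $ j\<bar>)"
    by (rule sum.cong) auto
  also have "(\<dots>)^2 \<le> (\<Sum>j\<in>UNIV. (if b0 $ j \<noteq> 0 then 1 else 0::real)^2) * (\<Sum>j\<in>UNIV. \<bar>b $ j\<bar>^2)"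
    by (rule Cauchy_Schwarz_ineq_sum)
  also have "(\<Sum>j\<in>UNIV. (if b0 $ j \<noteq> 0 then 1 else 0::real)^2) = (\<Sum>j\<in>UNIV. (if b0 $ j \<noteq> 0 then 1 else 0::real))"
    by (rule sum.cong) auto
  also have "\<dots> = real (card {j. b0 $ j \<noteq> 0})" by (simp add: sum.If_cases)
  also have "(\<Sum>j\<in>UNIV. \<bar>b $ j\<bar>^2) = b \<bullet> b" by (simp add: inner_vec_def power2_eq_square)
  finally show ?thesis .
qed



theorem mainTheorem10:
  fixes M :: "((real^'p) \<times> (real^'d)) measure"
    and G :: "(real^'d \<Rightarrow> real) set"
    and J :: "(real^'d \<Rightarrow> real) \<Rightarrow> (real^'d \<Rightarrow> real) \<Rightarrow> real"
    and h :: "real^'d \<Rightarrow> real^'p"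
    and beta0 :: "real^'p" and g0 :: "real^'d \<Rightarrow> real"
    and Jh delta0 lam mu R :: real
    and n :: nat and xs :: "nat \<Rightarrow> real^'p" and zs :: "nat \<Rightarrow> real^'d" and e :: "nat \<Rightarrow> real"
    and Y :: "nat \<Rightarrow> real"
    and beta_hat :: "real^'p" and g_hat :: "real^'d \<Rightarrow> real"
  assumes "prob_space M"
    and "sets M = sets borel"
    and "\<forall>j. integrable M (\<lambda>\<omega>. (fst \<omega> $ j)^2)"
    and "L2_subspace (distr M borel snd) G"
    and "semi_inner_on G J"
    and "g0 \<in> G"
    and "is_cond_exp_x_given_z M h"
    \<comment> \<open>(C3)\<close>
    and "0 < min_eigenvalue (cov_xtilde M h)"
    and "\<forall>i j. integrable M (\<lambda>\<omega>. h (snd \<omega>) $ i * h (snd \<omega>) $ j)"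
    \<comment> \<open>(C6)\<close>
    and "\<forall>j. (\<lambda>z. h z $ j) \<in> G"
    and "\<forall>j. seminormJ J (\<lambda>z. h z $ j) \<le> Jh"
    and "0 < delta0" and "delta0 \<le> 1/253"
    and "0 < lam" and "0 < mu" and "0 < R"
    and "mu^2 \<le> delta0 * R^2 / (2 * (1 + seminormJ J g0 + Jh)^2)"
    and "4 * lam^2 * real (card {j. beta0 $ j \<noteq> 0}) / min_eigenvalue (cov_xtilde M h) \<le> delta0 * R^2"
    and "0 < n"
    and "\<forall>i. Y i = xs i \<bullet> beta0 + g0 (zs i) + e i"
    and "event_T M G J lam mu delta0 R n xs zs e"
    and "g_hat \<in> G"
    and "\<forall>b. \<forall>g\<in>G. crit J lam mu n Y xs zs beta_hat g_hat \<le> crit J lam mu n Y xs zs b g"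
  shows "\<bar>mu^2 * (\<Sum>j\<in>UNIV. J g_hat (\<lambda>z. h z $ j) * (beta_hat $ j - beta0 $ j))\<bar>
           \<le> sqrt (2 * delta0) * R^2 * l1norm (beta_hat - beta0)"
proof -
  note PS = assms(1) and SM = assms(2) and L2x = assms(3) and GS = assms(4) and SI = assms(5)
    and g0G = assms(6) and CE = assms(7) and C3 = assms(8) and hh = assms(9) and hG = assms(10)
    and hJ = assms(11) and d0 = assms(12) and d1 = assms(13) and lam0 = assms(14) and mu0 = assms(15)
    and R0 = assms(16) and muB = assms(17) and lamB = assms(18) and n0 = assms(19) and Yeq = assms(20)
    and ET = assms(21) and ghG = assms(22) and opt = assms(23)
  define c where "c = sqrt delta0"
  define s2 where "s2 = sqrt (2::real)"
  have c0: "0 < c" using d0 by (simp add: c_def)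
  have cc: "c^2 = delta0" using d0 by (simp add: c_def)
  have s2sq: "s2^2 = 2" by (simp add: s2_def)
  have s2b: "1.41 \<le> s2" "s2 \<le> 1.42" using sqrt2_bounds by (simp_all add: s2_def)
  have s2p: "0 < s2" using s2b by simp
  have sq2d: "sqrt (2 * delta0) = s2 * c" by (simp add: s2_def c_def real_sqrt_mult)
  have sqd2: "sqrt (delta0 / 2) = c / s2" by (simp add: s2_def c_def real_sqrt_divide)
  define sJ where "sJ = seminormJ J"
  define K where "K = 1 + sJ g0 + Jh"
  have sJ0: "0 \<le> sJ g0" unfolding sJ_def by (rule sJ_nonneg[OF SI g0G])
  have Jh0: "0 \<le> Jh" using sJ_nonneg[OF SI hG[rule_format]] hJ by (meson order_trans)
  have Kp: "0 < K" using sJ0 Jh0 by (simp add: K_def)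
  have muB': "mu^2 \<le> delta0 * R^2 / (2 * K^2)" using muB unfolding K_def sJ_def .
  have muK: "mu * K * s2 \<le> c * R"
  proof -
    have e1: "(mu * K * s2)^2 = 2 * (K^2 * mu^2)" using s2sq by (simp add: power_mult_distrib)
    have e2: "K^2 * mu^2 \<le> K^2 * (delta0 * R^2 / (2 * K^2))" by (rule mult_left_mono[OF muB']) simp
    have e3: "K^2 * (delta0 * R^2 / (2 * K^2)) = delta0 * R^2 / 2" using Kp by simp
    have "(mu * K * s2)^2 \<le> delta0 * R^2" using e1 e2 e3 by linarith
    also have "\<dots> = (c * R)^2" using cc by (simp add: power_mult_distrib)
    finally show ?thesis by (rule power2_le_imp_le) (use c0 R0 in simp)
  qed
  have musJ0: "mu * sJ g0 \<le> c * R / s2"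
  proof -
    have "mu * sJ g0 \<le> mu * K" using mu0 by (intro mult_left_mono) (auto simp: K_def Jh0)
    then have "mu * sJ g0 * s2 \<le> mu * K * s2" using s2p by (intro mult_right_mono) auto
    then have "mu * sJ g0 * s2 \<le> c * R" using muK by linarith
    then show ?thesis using s2p by (simp add: pos_le_divide_eq)
  qed
  define bh where "bh = beta_hat - beta0"
  define dh where "dh = (\<lambda>z. g_hat z + (-1) * g0 z)"
  have dhG: "dh \<in> G" unfolding dh_def by (intro G_add[OF GS ghG] G_scale[OF GS g0G])
  have ghat_eq: "g_hat = (\<lambda>z. g0 z + 1 * dh z)" by (rule ext) (simp add: dh_def)
  have sJdh0: "0 \<le> sJ dh" unfolding sJ_def by (rule sJ_nonneg[OF SI dhG])
  have consist: "mu * sJ dh \<le> R"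
  proof -
    define th where "th = tau M J lam mu delta0 R bh dh"
    define Ph where "Ph = pop_sq M bh dh"
    have Ph0: "0 \<le> Ph" unfolding Ph_def by (rule pop_nonneg)
    have dpos: "0 < R * sqrt (delta0 / 2)" using R0 d0 by simp
    have th_eq: "th = lam * l1norm bh / (R * sqrt (delta0 / 2)) + sqrt (Ph + mu^2 * (sJ dh)^2)"
      unfolding th_def tau_def Ph_def sJ_def ..
    have th1: "0 \<le> lam * l1norm bh / (R * sqrt (delta0 / 2))"
      using lam0 l1_nonneg[of bh] dpos by simp
    have th2: "mu * sJ dh \<le> sqrt (Ph + mu^2 * (sJ dh)^2)"
    proof -
      have "sqrt ((mu * sJ dh)^2) \<le> sqrt (Ph + mu^2 * (sJ dh)^2)"
        using Ph0 by (intro real_sqrt_le_mono) (simp add: power_mult_distrib)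
      then show ?thesis using mu0 sJdh0 by simp
    qed
    have th0: "0 \<le> th" using th_eq th1 th2 mu0 sJdh0 by (smt (verit) mult_nonneg_nonneg)
    define t where "t = R / (R + th)"
    have t0: "0 < t" using R0 th0 by (simp add: t_def)
    have t1: "t \<le> 1" using R0 th0 by (simp add: t_def)
    define b where "b = t *\<^sub>R bh"
    define d where "d = (\<lambda>z. t * dh z)"
    have dG: "d \<in> G" unfolding d_def by (rule G_scale[OF GS dhG])
    have sJd: "sJ d = t * sJ dh" unfolding sJ_def d_def using sJ_scale[OF SI GS dhG, of t] t0 by simp
    define P where "P = pop_sq M b d"
    have P0: "0 \<le> P" unfolding P_def by (rule pop_nonneg)
    have PPh: "P = t^2 * Ph" unfolding P_def Ph_def b_def d_def by (rule pop_scale)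
    define L where "L = l1norm b"
    have L0: "0 \<le> L" unfolding L_def by (rule l1_nonneg)
    define A where "A = sqrt (P + mu^2 * (sJ d)^2)"
    have A0: "0 \<le> A" unfolding A_def using P0 by simp
    have AA: "A^2 = P + mu^2 * (sJ d)^2" unfolding A_def using P0 by simp
    have tau_bd: "tau M J lam mu delta0 R b d = t * th"
    proof -
      have "tau M J lam mu delta0 R b d = lam * L / (R * sqrt (delta0 / 2)) + A"
        unfolding tau_def L_def A_def P_def sJ_def ..
      also have "lam * L / (R * sqrt (delta0 / 2)) = t * (lam * l1norm bh / (R * sqrt (delta0 / 2)))"
        unfolding L_def b_def using t0 by (simp add: l1_scale)
      also have "A = t * sqrt (Ph + mu^2 * (sJ dh)^2)"
      proof -
        have "P + mu^2 * (sJ d)^2 = t^2 * (Ph + mu^2 * (sJ dh)^2)"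
          by (simp add: PPh sJd power_mult_distrib algebra_simps)
        then show ?thesis unfolding A_def using t0 by (simp add: real_sqrt_mult)
      qed
      finally show ?thesis using th_eq by (simp add: algebra_simps)
    qed
    have tth: "t * th \<le> R"
    proof -
      have "t * th = R * th / (R + th)" by (simp add: t_def)
      also have "\<dots> \<le> R" using R0 th0 by (simp add: divide_le_eq)
      finally show ?thesis .
    qed
    have inT: "tau M J lam mu delta0 R b d \<le> R" using tau_bd tth by simp
    have ET1: "\<bar>emp_sq n xs zs b d - P\<bar> \<le> delta0 * R^2"
      and ET2: "\<bar>\<Sum>i<n. e i * (xs i \<bullet> b + d (zs i))\<bar> / real n \<le> delta0 * R^2"
      using ET dG inT unfolding event_T_def P_def by auto
    define a where "a i = xs i \<bullet> bh + dh (zs i)" for i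
    have tai: "xs i \<bullet> b + d (zs i) = t * a i" for i
      by (simp add: a_def b_def d_def algebra_simps)
    define J00 where "J00 = J g0 g0"
    define J0d where "J0d = J g0 dh"
    define Jdd where "Jdd = J dh dh"
    have Jdd0: "0 \<le> Jdd" unfolding Jdd_def by (rule J_nonneg[OF SI dhG])
    have Jdd_eq: "Jdd = (sJ dh)^2" unfolding Jdd_def sJ_def by (simp add: sJ_sq[OF SI dhG])
    have sJg0sq: "(sJ g0)^2 = J00" unfolding J00_def sJ_def by (rule sJ_sq[OF SI g0G])
    have sJghsq: "(sJ g_hat)^2 = J00 + 2 * J0d + Jdd"
    proof -
      have "(sJ g_hat)^2 = J g_hat g_hat" unfolding sJ_def by (rule sJ_sq[OF SI ghG])
      also have "\<dots> = J00 + 2 * J0d + Jdd"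
        unfolding J00_def J0d_def Jdd_def using J_expand[OF SI GS g0G dhG, of 1] ghat_eq by simp
      finally show ?thesis .
    qed
    define E0 where "E0 = (1 / real n) * (\<Sum>i<n. (e i)^2)"
    define E1 where "E1 = (1 / real n) * (\<Sum>i<n. (e i - a i)^2)"
    define Et where "Et = (1 / real n) * (\<Sum>i<n. (e i - t * a i)^2)"
    have crit1: "crit J lam mu n Y xs zs beta_hat g_hat = E1 + lam * l1norm beta_hat + mu^2 * (J00 + 2 * J0d + Jdd)"
    proof -
      have "Y i - xs i \<bullet> beta_hat - g_hat (zs i) = e i - a i" for i
        using Yeq by (simp add: a_def bh_def dh_def inner_diff_right algebra_simps)
      then show ?thesis unfolding crit_def E1_def sJghsq[unfolded sJ_def, symmetric] by simp
    qed
    have crit0: "crit J lam mu n Y xs zs beta0 g0 = E0 + lam * l1norm beta0 + mu^2 * J00"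
    proof -
      have "Y i - xs i \<bullet> beta0 - g0 (zs i) = e i" for i using Yeq by simp
      then show ?thesis unfolding crit_def E0_def sJg0sq[unfolded sJ_def, symmetric] by simp
    qed
    have opt0: "E1 + lam * l1norm beta_hat + mu^2 * (J00 + 2 * J0d + Jdd) \<le> E0 + lam * l1norm beta0 + mu^2 * J00"
      using opt g0G crit1 crit0 by metis
    have cvE: "Et \<le> (1 - t) * E0 + t * E1"
    proof -
      have "(\<Sum>i<n. (e i - t * a i)^2) \<le> (\<Sum>i<n. (1 - t) * (e i)^2 + t * (e i - a i)^2)"
      proof (rule sum_mono)
        fix i
        have "(1 - t) * (e i)^2 + t * (e i - a i)^2 - (e i - t * a i)^2 = t * (1 - t) * (a i)^2"
          by (simp add: power2_eq_square algebra_simps)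
        moreover have "0 \<le> t * (1 - t) * (a i)^2" using t0 t1 by simp
        ultimately show "(e i - t * a i)^2 \<le> (1 - t) * (e i)^2 + t * (e i - a i)^2" by linarith
      qed
      then have "(1 / real n) * (\<Sum>i<n. (e i - t * a i)^2) \<le> (1 / real n) * (\<Sum>i<n. (1 - t) * (e i)^2 + t * (e i - a i)^2)"
        by (rule mult_left_mono) simp
      moreover have "(1 / real n) * (\<Sum>i<n. (1 - t) * (e i)^2 + t * (e i - a i)^2) = (1 - t) * E0 + t * E1"
        unfolding E0_def E1_def by (simp only: sum.distrib flip: sum_distrib_left) (simp only: distrib_left mult.left_commute)
      ultimately show ?thesis unfolding Et_def by simp
    qed
    have cvL: "l1norm (beta0 + b) \<le> (1 - t) * l1norm beta0 + t * l1norm beta_hat"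
    proof -
      have "l1norm (beta0 + b) = (\<Sum>j\<in>UNIV. \<bar>(1 - t) * beta0 $ j + t * beta_hat $ j\<bar>)"
        unfolding l1norm_def b_def bh_def by (simp add: algebra_simps)
      also have "\<dots> \<le> (\<Sum>j\<in>UNIV. (1 - t) * \<bar>beta0 $ j\<bar> + t * \<bar>beta_hat $ j\<bar>)"
      proof (rule sum_mono)
        fix j
        have "\<bar>(1 - t) * beta0 $ j + t * beta_hat $ j\<bar> \<le> \<bar>(1 - t) * beta0 $ j\<bar> + \<bar>t * beta_hat $ j\<bar>"
          by (rule abs_triangle_ineq)
        also have "\<dots> = (1 - t) * \<bar>beta0 $ j\<bar> + t * \<bar>beta_hat $ j\<bar>" using t0 t1 by (simp add: abs_mult)
        finally show "\<bar>(1 - t) * beta0 $ j + t * beta_hat $ j\<bar> \<le> (1 - t) * \<bar>beta0 $ j\<bar> + t * \<bar>beta_hat $ j\<bar>" .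
      qed
      also have "\<dots> = (1 - t) * l1norm beta0 + t * l1norm beta_hat"
        by (simp add: l1norm_def sum.distrib sum_distrib_left)
      finally show ?thesis .
    qed
    have cvJ: "J00 + 2 * t * J0d + t^2 * Jdd \<le> (1 - t) * J00 + t * (J00 + 2 * J0d + Jdd)"
    proof -
      have "t^2 * Jdd \<le> t * Jdd" using t0 t1 Jdd0 by (intro mult_right_mono) (auto simp: power2_eq_square)
      then show ?thesis by (simp add: algebra_simps)
    qed
    have basic0: "Et + lam * l1norm (beta0 + b) + mu^2 * (J00 + 2 * t * J0d + t^2 * Jdd)
        \<le> E0 + lam * l1norm beta0 + mu^2 * J00"
    proof -
      have "lam * l1norm (beta0 + b) \<le> lam * ((1 - t) * l1norm beta0 + t * l1norm beta_hat)"
        using cvL lam0 by (intro mult_left_mono) auto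
      moreover have "mu^2 * (J00 + 2 * t * J0d + t^2 * Jdd) \<le> mu^2 * ((1 - t) * J00 + t * (J00 + 2 * J0d + Jdd))"
        using cvJ by (intro mult_left_mono) auto
      moreover have "t * (E1 + lam * l1norm beta_hat + mu^2 * (J00 + 2 * J0d + Jdd)) \<le> t * (E0 + lam * l1norm beta0 + mu^2 * J00)"
        using opt0 t0 by (intro mult_left_mono) auto
      ultimately show ?thesis using cvE by (simp add: algebra_simps)
    qed
    define Se where "Se = (\<Sum>i<n. e i * (xs i \<bullet> b + d (zs i)))"
    have Et_eq: "Et = E0 - 2 * (Se / real n) + emp_sq n xs zs b d"
    proof -
      have "Et = (1 / real n) * (\<Sum>i<n. (e i)^2 - 2 * (e i * (t * a i)) + (t * a i)^2)"
        unfolding Et_def by (simp add: power2_eq_square algebra_simps)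
      also have "\<dots> = E0 - 2 * (Se / real n) + emp_sq n xs zs b d"
        unfolding E0_def Se_def emp_sq_def tai
        by (simp add: sum.distrib sum_subtractf sum_distrib_left sum_divide_distrib algebra_simps)
      finally show ?thesis .
    qed
    have basic: "emp_sq n xs zs b d + lam * l1norm (beta0 + b) + mu^2 * (2 * t * J0d + t^2 * Jdd)
        \<le> 2 * (Se / real n) + lam * l1norm beta0"
      using basic0 Et_eq by (simp add: algebra_simps)
    have b_emp: "P - delta0 * R^2 \<le> emp_sq n xs zs b d" using ET1 by linarith
    have b_Se: "Se / real n \<le> delta0 * R^2" using ET2 unfolding Se_def by (smt (verit) abs_ge_self divide_right_mono of_nat_0_le_iff)
    define LS where "LS = (\<Sum>j\<in>UNIV. if beta0 $ j \<noteq> 0 then \<bar>b $ j\<bar> else 0)"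
    have LS0: "0 \<le> LS" unfolding LS_def by (intro sum_nonneg) auto
    have b_l1: "l1norm beta0 + L - 2 * LS \<le> l1norm (beta0 + b)"
      unfolding L_def LS_def by (rule l1_basic)
    have b_J: "- 2 * t * (sJ g0 * sJ dh) + t^2 * Jdd \<le> 2 * t * J0d + t^2 * Jdd"
    proof -
      have "\<bar>J0d\<bar> \<le> sJ g0 * sJ dh" unfolding J0d_def sJ_def by (rule J_CS[OF SI GS g0G dhG])
      then have "- (sJ g0 * sJ dh) \<le> J0d" by linarith
      then have "t * (- (sJ g0 * sJ dh)) \<le> t * J0d" using t0 by (intro mult_left_mono) auto
      then show ?thesis by (simp add: mult_ac)
    qed
    have step1: "P + mu^2 * (sJ d)^2 + lam * L \<le> 3 * (delta0 * R^2) + 2 * lam * LS + 2 * mu^2 * (sJ g0 * sJ d)"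
    proof -
      have h1: "mu^2 * (- 2 * t * (sJ g0 * sJ dh) + t^2 * Jdd) \<le> mu^2 * (2 * t * J0d + t^2 * Jdd)"
        using b_J by (intro mult_left_mono) auto
      have h2: "mu^2 * (- 2 * t * (sJ g0 * sJ dh) + t^2 * Jdd) = mu^2 * (sJ d)^2 - 2 * mu^2 * (sJ g0 * sJ d)"
        by (simp add: sJd Jdd_eq power2_eq_square algebra_simps)
      have "lam * (l1norm beta0 + L - 2 * LS) \<le> lam * l1norm (beta0 + b)"
        using b_l1 lam0 by (intro mult_left_mono) auto
      then have h3: "lam * l1norm beta0 + lam * L - 2 * lam * LS \<le> lam * l1norm (beta0 + b)"
        by (simp add: algebra_simps)
      show ?thesis using h1 h2 h3 basic b_emp b_Se by linarith
    qed
    define Lam where "Lam = min_eigenvalue (cov_xtilde M h)"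
    have Lam0: "0 < Lam" using C3 by (simp add: Lam_def)
    have popl: "Lam * (b \<bullet> b) \<le> P"
      unfolding Lam_def P_def by (rule pop_lower[OF PS SM L2x GS CE hh dG])
    have comp: "2 * lam * LS \<le> c * R * A"
    proof -
      define s0 where "s0 = real (card {j. beta0 $ j \<noteq> 0})"
      have s00: "0 \<le> s0" by (simp add: s0_def)
      have lamB': "4 * lam^2 * s0 \<le> delta0 * R^2 * Lam"
        using lamB Lam0 unfolding s0_def Lam_def by (simp add: divide_le_eq)
      have bb0: "0 \<le> b \<bullet> b" by simp
      have "(2 * lam * LS)^2 = 4 * lam^2 * LS^2" by (simp add: power_mult_distrib)
      also have "\<dots> \<le> 4 * lam^2 * (s0 * (b \<bullet> b))"
        using LS_bound[of beta0 b] unfolding LS_def s0_def by (intro mult_left_mono) auto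
      also have "\<dots> = (4 * lam^2 * s0) * (b \<bullet> b)" by simp
      also have "\<dots> \<le> (delta0 * R^2 * Lam) * (b \<bullet> b)" using lamB' bb0 by (rule mult_right_mono)
      also have "\<dots> = delta0 * R^2 * (Lam * (b \<bullet> b))" by simp
      also have "\<dots> \<le> delta0 * R^2 * P" using popl d0 by (intro mult_left_mono) auto
      also have "\<dots> \<le> delta0 * R^2 * A^2" using AA d0 by (intro mult_left_mono) auto
      also have "\<dots> = (c * R * A)^2" using cc by (simp add: power_mult_distrib)
      finally have "(2 * lam * LS)^2 \<le> (c * R * A)^2" .
      then show ?thesis by (rule power2_le_imp_le) (use c0 R0 A0 in simp)
    qed
    have muD: "mu * sJ d \<le> A"
    proof -
      have "(mu * sJ d)^2 \<le> A^2" using AA P0 by (simp add: power_mult_distrib)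
      then show ?thesis by (rule power2_le_imp_le) (use A0 in simp)
    qed
    have crossb: "2 * mu^2 * (sJ g0 * sJ d) \<le> s2 * c * R * A"
    proof -
      have sJd0: "0 \<le> sJ d" using sJd t0 sJdh0 by simp
      have "2 * mu^2 * (sJ g0 * sJ d) = 2 * (mu * sJ g0) * (mu * sJ d)" by (simp add: power2_eq_square)
      also have "\<dots> \<le> 2 * (c * R / s2) * A"
        using musJ0 muD mu0 sJ0 sJd0 c0 R0 s2p by (intro mult_mono) auto
      also have "\<dots> = s2 * c * R * A" using s2sq s2p by (simp add: power2_eq_square field_simps)
      finally show ?thesis .
    qed
    have main_ineq: "A^2 + lam * L \<le> 3 * c^2 * R^2 + (1 + s2) * c * R * A"
      using step1 comp crossb AA cc by (simp add: algebra_simps)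
    have "lam * L / (R * (c / s2)) + A \<le> R / 2"
      using numeric_key[OF c0 _ s2sq s2b A0 _ R0 main_ineq] cc d1 lam0 L0 by simp
    then have "tau M J lam mu delta0 R b d \<le> R / 2"
      unfolding tau_def using sqd2 by (simp add: L_def A_def P_def sJ_def)
    then have "t * th \<le> R / 2" using tau_bd by simp
    then have "R * th / (R + th) \<le> R / 2" by (simp add: t_def)
    then have "th \<le> R" using R0 th0 by (simp add: field_simps)
    then show ?thesis using th_eq th1 th2 by linarith
  qed
  have sJgh: "sJ g_hat \<le> sJ g0 + sJ dh"
    using sJ_tri[OF SI GS g0G dhG] unfolding sJ_def by (simp add: dh_def)
  have sum_bound: "\<bar>\<Sum>j\<in>UNIV. J g_hat (\<lambda>z. h z $ j) * (beta_hat $ j - beta0 $ j)\<bar> \<le> sJ g_hat * Jh * l1norm bh"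
  proof -
    have "\<bar>\<Sum>j\<in>UNIV. J g_hat (\<lambda>z. h z $ j) * (beta_hat $ j - beta0 $ j)\<bar>
        \<le> (\<Sum>j\<in>UNIV. \<bar>J g_hat (\<lambda>z. h z $ j) * (beta_hat $ j - beta0 $ j)\<bar>)" by (rule sum_abs)
    also have "\<dots> \<le> (\<Sum>j\<in>UNIV. sJ g_hat * Jh * \<bar>bh $ j\<bar>)"
    proof (rule sum_mono)
      fix j
      have "\<bar>J g_hat (\<lambda>z. h z $ j)\<bar> \<le> sJ g_hat * sJ (\<lambda>z. h z $ j)"
        unfolding sJ_def by (rule J_CS[OF SI GS ghG hG[rule_format]])
      also have "\<dots> \<le> sJ g_hat * Jh"
        using hJ sJ_nonneg[OF SI ghG] unfolding sJ_def by (intro mult_left_mono) auto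
      finally show "\<bar>J g_hat (\<lambda>z. h z $ j) * (beta_hat $ j - beta0 $ j)\<bar> \<le> sJ g_hat * Jh * \<bar>bh $ j\<bar>"
        by (simp add: abs_mult bh_def mult_right_mono)
    qed
    also have "\<dots> = sJ g_hat * Jh * l1norm bh" by (simp add: l1norm_def sum_distrib_left)
    finally show ?thesis .
  qed
  have coef: "mu^2 * sJ g_hat * Jh \<le> s2 * c * R^2"
  proof -
    have "mu^2 * sJ g_hat * Jh \<le> mu^2 * (sJ g0 + sJ dh) * Jh"
      using sJgh Jh0 by (intro mult_right_mono mult_left_mono) auto
    also have "\<dots> = mu^2 * sJ g0 * Jh + mu * (mu * sJ dh) * Jh" by (simp add: power2_eq_square algebra_simps)
    also have "\<dots> \<le> mu^2 * K^2 + mu * R * K"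
    proof (rule add_mono)
      have "sJ g0 * Jh \<le> K * K" using sJ0 Jh0 by (intro mult_mono) (auto simp: K_def)
      then have "mu^2 * (sJ g0 * Jh) \<le> mu^2 * (K * K)" by (rule mult_left_mono) simp
      then show "mu^2 * sJ g0 * Jh \<le> mu^2 * K^2" by (simp add: power2_eq_square mult.assoc)
      have "mu * (mu * sJ dh) * Jh \<le> mu * R * Jh" using consist mu0 Jh0 by (simp add: mult_right_mono)
      also have "\<dots> \<le> mu * R * K" using mu0 R0 by (simp add: K_def sJ0)
      finally show "mu * (mu * sJ dh) * Jh \<le> mu * R * K" .
    qed
    also have "\<dots> \<le> (c * R / s2)^2 + (c * R / s2) * R"
    proof -
      have mK: "mu * K \<le> c * R / s2" using muK s2p by (simp add: pos_le_divide_eq)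
      have "(mu * K)^2 \<le> (c * R / s2)^2"
        by (rule power_mono[OF mK]) (use mu0 Kp in simp)
      then have "mu^2 * K^2 \<le> (c * R / s2)^2" by (simp add: power_mult_distrib)
      moreover have "mu * K * R \<le> (c * R / s2) * R" using mK R0 by (intro mult_right_mono) auto
      then have "mu * R * K \<le> (c * R / s2) * R" by (simp add: mult_ac)
      ultimately show ?thesis by simp
    qed
    also have "\<dots> \<le> s2 * c * R^2"
    proof -
      have "(c * R / s2)^2 + (c * R / s2) * R = c * R^2 * (c / 2 + 1 / s2)"
        using s2sq s2p by (simp add: power2_eq_square field_simps)
      also have "\<dots> \<le> c * R^2 * s2"
      proof (rule mult_left_mono)
        have "c^2 \<le> 1^2" using cc d1 by simp
        then have "c \<le> 1" by (rule power2_le_imp_le) simp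
        moreover have "1 / s2 = s2 / 2" using s2sq s2p by (simp add: power2_eq_square field_simps)
        ultimately show "c / 2 + 1 / s2 \<le> s2" using s2b by simp
      qed (use c0 in simp)
      finally show ?thesis by (simp add: mult_ac)
    qed
    finally show ?thesis .
  qed
  have "\<bar>mu^2 * (\<Sum>j\<in>UNIV. J g_hat (\<lambda>z. h z $ j) * (beta_hat $ j - beta0 $ j))\<bar>
      = mu^2 * \<bar>\<Sum>j\<in>UNIV. J g_hat (\<lambda>z. h z $ j) * (beta_hat $ j - beta0 $ j)\<bar>" by (simp add: abs_mult)
  also have "\<dots> \<le> mu^2 * (sJ g_hat * Jh * l1norm bh)" using sum_bound by (simp add: mult_left_mono)
  also have "\<dots> \<le> s2 * c * R^2 * l1norm bh"
    using coef l1_nonneg[of bh] by (simp add: mult.assoc[symmetric] mult_right_mono)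
  finally show ?thesis by (simp add: sq2d bh_def)
qed


end
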